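(* Let $V$ be a vertex algebra, $M_1,M_2,M_3$ be $V$-modules and $\mathcal Y:M_1\to\mathrm{Hom}(M_2,M_3[[z]]z^{-S})$, $a\mapsto\mathcal Y(a,z)=\sum_{n\in\mathbb C}a_{(n)}z^{-n-1}$, a linear map satisfying $T\mathcal Y(a,z)-\mathcal Y(a,z)T=\mathcal Y(Ta,z)=\partial_z\mathcal Y(a,z)$. Then $\mathcal Y$ satisfies the Jacobi identity $$\iota_{z_1,z_2}(z_1-z_2)^{n}Y(v,z_1)\mathcal{Y}(a,z_2)-\iota_{z_2,z_1}(z_1-z_2)^{n}\mathcal{Y}(a,z_2)Y(v,z_1)=\sum_{i\ge0}\mathcal Y(v_{(n+i)}a,z_2)\,\partial^{(i)}_{z_2}\delta(z_1,z_2)$$ for all $v\in V$, $a\in M_1$ and $n\in\mathbb Z$ if and only if for all $v\in V$, $a\in M_1$, $b\in M_2$ the following two identities hold: $$\mathcal Y(v_{(-1)}a,z)b=Y_+(v,z)\mathcal Y(a,z)b+\mathcal Y(a,z)Y_-(v,z)b,$$ $$Y(v,z_1)\mathcal Y(a,z_2)b-\mathcal Y(a,z_2)Y(v,z_1)b=\sum_{i\ge0}\mathcal Y(v_{(i)}a,z_2)b\,\partial^{(i)}_{z_2}\delta(z_1,z_2).$$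
   Context: $V$ is a vertex algebra with fields $Y(v,z)=\sum_{n\in\mathbb Z}v_{(n)}z^{-n-1}$. A $V$-module is a vector space $M$ with $T\in\mathrm{End}(M)$ and fields $Y^M(v,z)=\sum_{n\in\mathbb Z}v_{(n)}z^{-n-1}\in\mathrm{Hom}(M,M((z)))$ with $Y^M(\mathbf1,z)=\mathrm{id}$, $[T,Y^M(v,z)]=\partial_zY^M(v,z)$ and the Jacobi identity above (with $\mathcal Y$ replaced by $Y^M$); on modules $Y(v,z)$ denotes $Y^M(v,z)$. $S\subset\mathbb C$ satisfies $S+\mathbb Z=S$, $S/\mathbb Z$ finite, and $U[[z]]z^{-S}$ denotes formal sums $\sum_nf_nz^n$ with $n$ in a finite union of sets $-d+\mathbb Z_{\ge0}$, $d\in S$. $\iota_{z_1,z_2}$ denotes expansion in nonnegative powers of $z_2$ (domain $|z_1|>|z_2|$), $\delta(z_1,z_2)=\sum_{n\in\mathbb Z}z_1^nz_2^{-n-1}$, $\partial^{(i)}_{z}=\partial_z^i/i!$, $Y_+(v,z):=\sum_{n<0}v_{(n)}z^{-n-1}$ and $Y_-(v,z):=\sum_{n\ge0}v_{(n)}z^{-n-1}$. *)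

theory Defs
  imports Complex_Main "HOL-Library.Groups_Big_Fun"
begin

text \<open>
  All vector spaces are over the complex numbers; a space of type 'x is
  given by its scalar multiplication s :: complex => 'x => 'x (required to satisfy the
  vector_space axioms).  A field Y(v,z) = sum_n v_(n) z^(-n-1) is encoded by its modes:
  act v n x is v_(n) x.  An operator-valued series YY(a,z) = sum_{n in C} a_(n) z^(-n-1)
  is encoded by YY a n b = a_(n) b (n complex).  Identities between formal series are
  stated coefficientwise; the (possibly infinite looking) sums over j, i >= 0 are written
  with Sum_any (sum over the finite support), and are finite under the truncation
  hypotheses.
\<close>

text \<open>Coefficient of z1^(-m-1) z2^(-k-1) in the Jacobi identity
  iota_{z1,z2}(z1-z2)^n Y(v,z1) YY(a,z2) b - iota_{z2,z1}(z1-z2)^n YY(a,z2) Y(v,z1) b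
    = sum_{i>=0} YY(v_(n+i) a, z2) b  d^(i)_{z2} delta(z1,z2).
  Here act3 is Y(v,.) on the target space, act2 is Y(v,.) on the source space of YY(a,.),
  act1 is Y(v,.) on the space containing a, and s3 the scalar multiplication of the target.\<close>
definition jacobi_coeff ::
  "(complex \<Rightarrow> 'c \<Rightarrow> 'c) \<Rightarrow> ('v \<Rightarrow> int \<Rightarrow> 'c \<Rightarrow> 'c) \<Rightarrow>
   ('a \<Rightarrow> 'k::comm_ring_1 \<Rightarrow> 'b \<Rightarrow> 'c::ab_group_add) \<Rightarrow>
   ('v \<Rightarrow> int \<Rightarrow> 'b \<Rightarrow> 'b) \<Rightarrow> ('v \<Rightarrow> int \<Rightarrow> 'a \<Rightarrow> 'a) \<Rightarrow>
   'v \<Rightarrow> 'a \<Rightarrow> 'b \<Rightarrow> int \<Rightarrow> int \<Rightarrow> 'k \<Rightarrow> bool" where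
  "jacobi_coeff s3 act3 YY act2 act1 v a b n m k \<longleftrightarrow>
     (\<Sum>j::nat. s3 ((-1) ^ j * ((of_int n :: complex) gchoose j))
                    (act3 v (m + n - int j) (YY a (k + of_nat j) b)))
   - (\<Sum>j::nat. s3 ((-1::complex) powi (n + int j) * ((of_int n :: complex) gchoose j))
                    (YY a (k + of_int n - of_nat j) (act2 v (m + int j) b)))
   = (\<Sum>i::nat. s3 ((of_int m :: complex) gchoose i)
                    (YY (act1 v (n + int i) a) (of_int m + k - of_nat i) b))"

text \<open>Coefficient of z^(-k-1) in YY(v_(-1)a,z)b = Y_+(v,z)YY(a,z)b + YY(a,z)Y_-(v,z)b.\<close>
definition normal_order_coeff ::
  "('v \<Rightarrow> int \<Rightarrow> 'c \<Rightarrow> 'c) \<Rightarrow>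
   ('a \<Rightarrow> 'k::comm_ring_1 \<Rightarrow> 'b \<Rightarrow> 'c::ab_group_add) \<Rightarrow>
   ('v \<Rightarrow> int \<Rightarrow> 'b \<Rightarrow> 'b) \<Rightarrow> ('v \<Rightarrow> int \<Rightarrow> 'a \<Rightarrow> 'a) \<Rightarrow>
   'v \<Rightarrow> 'a \<Rightarrow> 'b \<Rightarrow> 'k \<Rightarrow> bool" where
  "normal_order_coeff act3 YY act2 act1 v a b k \<longleftrightarrow>
     YY (act1 v (-1) a) k b =
       (\<Sum>j::nat. act3 v (-1 - int j) (YY a (k + of_nat j) b))
     + (\<Sum>j::nat. YY a (k - 1 - of_nat j) (act2 v (int j) b))"

text \<open>Coefficient of z1^(-m-1) z2^(-k-1) in
  Y(v,z1)YY(a,z2)b - YY(a,z2)Y(v,z1)b = sum_{i>=0} YY(v_(i)a,z2)b d^(i)_{z2}delta(z1,z2).\<close>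
definition commutator_coeff ::
  "(complex \<Rightarrow> 'c \<Rightarrow> 'c) \<Rightarrow> ('v \<Rightarrow> int \<Rightarrow> 'c \<Rightarrow> 'c) \<Rightarrow>
   ('a \<Rightarrow> 'k::comm_ring_1 \<Rightarrow> 'b \<Rightarrow> 'c::ab_group_add) \<Rightarrow>
   ('v \<Rightarrow> int \<Rightarrow> 'b \<Rightarrow> 'b) \<Rightarrow> ('v \<Rightarrow> int \<Rightarrow> 'a \<Rightarrow> 'a) \<Rightarrow>
   'v \<Rightarrow> 'a \<Rightarrow> 'b \<Rightarrow> int \<Rightarrow> 'k \<Rightarrow> bool" where
  "commutator_coeff s3 act3 YY act2 act1 v a b m k \<longleftrightarrow>
     act3 v m (YY a k b) - YY a k (act2 v m b)
       = (\<Sum>i::nat. s3 ((of_int m :: complex) gchoose i)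
                      (YY (act1 v (int i) a) (of_int m + k - of_nat i) b))"

text \<open>Vertex algebra (V, vacuum, T, Y) with Y(v,z) = sum_n v_(n) z^(-n-1):
  Y linear in v, each v_(n) linear, Y(v,z)w in V((z)), Y(1,z) = id, Y(v,z)1 = v + O(z),
  T linear with T 1 = 0 and [T,Y(v,z)] = d/dz Y(v,z), and the Jacobi identity.\<close>
definition vertex_algebra ::
  "(complex \<Rightarrow> 'v::ab_group_add \<Rightarrow> 'v) \<Rightarrow> 'v \<Rightarrow> ('v \<Rightarrow> 'v) \<Rightarrow> ('v \<Rightarrow> int \<Rightarrow> 'v \<Rightarrow> 'v) \<Rightarrow> bool" where
  "vertex_algebra sV vac TV Y \<longleftrightarrow>
     vector_space sV \<and>
     (\<forall>v n. Vector_Spaces.linear sV sV (Y v n)) \<and>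
     (\<forall>n w. Vector_Spaces.linear sV sV (\<lambda>v. Y v n w)) \<and>
     (\<forall>v w. \<exists>N. \<forall>n\<ge>N. Y v n w = 0) \<and>
     (\<forall>n w. Y vac n w = (if n = -1 then w else 0)) \<and>
     (\<forall>v n. n \<ge> 0 \<longrightarrow> Y v n vac = 0) \<and>
     (\<forall>v. Y v (-1) vac = v) \<and>
     Vector_Spaces.linear sV sV TV \<and> TV vac = 0 \<and>
     (\<forall>v n w. TV (Y v n w) - Y v n (TV w) = sV (- of_int n) (Y v (n - 1) w)) \<and>
     (\<forall>v a w n m k. jacobi_coeff sV Y Y Y Y v a w n m k)"

definition va_module ::
  "(complex \<Rightarrow> 'v::ab_group_add \<Rightarrow> 'v) \<Rightarrow> 'v \<Rightarrow> ('v \<Rightarrow> int \<Rightarrow> 'v \<Rightarrow> 'v) \<Rightarrow>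
   (complex \<Rightarrow> 'm::ab_group_add \<Rightarrow> 'm) \<Rightarrow> ('m \<Rightarrow> 'm) \<Rightarrow> ('v \<Rightarrow> int \<Rightarrow> 'm \<Rightarrow> 'm) \<Rightarrow> bool" where
  "va_module sV vac Y sM TM YM \<longleftrightarrow>
     vector_space sM \<and>
     (\<forall>v n. Vector_Spaces.linear sM sM (YM v n)) \<and>
     (\<forall>n x. Vector_Spaces.linear sV sM (\<lambda>v. YM v n x)) \<and>
     (\<forall>v x. \<exists>N. \<forall>n\<ge>N. YM v n x = 0) \<and>
     (\<forall>n x. YM vac n x = (if n = -1 then x else 0)) \<and>
     Vector_Spaces.linear sM sM TM \<and>
     (\<forall>v n x. TM (YM v n x) - YM v n (TM x) = sM (- of_int n) (YM v (n - 1) x)) \<and>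
     (\<forall>v a x n m k. jacobi_coeff sM YM YM YM Y v a x n m k)"

definition admissible_exponents :: "complex set \<Rightarrow> bool" where
  "admissible_exponents S \<longleftrightarrow>
     (\<forall>s\<in>S. \<forall>k::int. s + of_int k \<in> S) \<and>
     finite ((\<lambda>s. {s + of_int k | k::int. True}) ` S)"

text \<open>YY(a,z) b = sum_n a_(n) b z^(-n-1) lies in M3[[z]]z^(-S): the exponents -n-1 with
  nonzero coefficient lie in a finite union of sets -d + Z_{>=0}, d in S.\<close>
definition in_series_S :: "complex set \<Rightarrow> (complex \<Rightarrow> 'c::zero) \<Rightarrow> bool" where
  "in_series_S S f \<longleftrightarrow>
     (\<exists>D. finite D \<and> D \<subseteq> S \<and>
        (\<forall>n. f n \<noteq> 0 \<longrightarrow> (\<exists>d\<in>D. \<exists>j::nat. - n - 1 = - d + of_nat j)))"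

end

theory Submission imports Defs begin

definition ez :: "(nat \<Rightarrow> 'a::zero) \<Rightarrow> bool" where
  "ez f \<longleftrightarrow> (\<exists>N. \<forall>j\<ge>N. f j = 0)"

lemma ez_Sum_any:
  fixes f :: "nat \<Rightarrow> 'a::comm_monoid_add"
  assumes "\<forall>j\<ge>N. f j = 0" shows "Sum_any f = sum f {..<N}"
  by (rule Sum_any.expand_superset) (use assms not_le in auto)

lemma ez_bound:
  assumes "ez f" obtains N where "\<And>j. j \<ge> N \<Longrightarrow> f j = 0"
proof -
  from assms obtain N where "\<forall>j\<ge>N. f j = 0" unfolding ez_def by blast
  then show ?thesis using that by blast
qed

lemma ez_diff:
  fixes f g :: "nat \<Rightarrow> 'a::ab_group_add"
  assumes "ez f" "ez g"
  shows "Sum_any (\<lambda>j. f j - g j) = Sum_any f - Sum_any g"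
proof -
  obtain N1 where 1: "\<forall>j\<ge>N1. f j = 0" using assms(1) unfolding ez_def by blast
  obtain N2 where 2: "\<forall>j\<ge>N2. g j = 0" using assms(2) unfolding ez_def by blast
  let ?N = "max N1 N2"
  have "Sum_any f = sum f {..<?N}" by (rule ez_Sum_any) (use 1 in auto)
  moreover have "Sum_any g = sum g {..<?N}" by (rule ez_Sum_any) (use 2 in auto)
  moreover have "Sum_any (\<lambda>j. f j - g j) = sum (\<lambda>j. f j - g j) {..<?N}"
    by (rule ez_Sum_any) (use 1 2 in auto)
  ultimately show ?thesis by (simp add: sum_subtractf)
qed

lemma ez_add:
  fixes f g :: "nat \<Rightarrow> 'a::ab_group_add"
  assumes "ez f" "ez g"
  shows "Sum_any (\<lambda>j. f j + g j) = Sum_any f + Sum_any g"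
proof -
  obtain N1 where 1: "\<forall>j\<ge>N1. f j = 0" using assms(1) unfolding ez_def by blast
  obtain N2 where 2: "\<forall>j\<ge>N2. g j = 0" using assms(2) unfolding ez_def by blast
  let ?N = "max N1 N2"
  have "Sum_any f = sum f {..<?N}" by (rule ez_Sum_any) (use 1 in auto)
  moreover have "Sum_any g = sum g {..<?N}" by (rule ez_Sum_any) (use 2 in auto)
  moreover have "Sum_any (\<lambda>j. f j + g j) = sum (\<lambda>j. f j + g j) {..<?N}"
    by (rule ez_Sum_any) (use 1 2 in auto)
  ultimately show ?thesis by (simp add: sum.distrib)
qed

lemma ez_shift:
  fixes f :: "nat \<Rightarrow> 'a::comm_monoid_add"
  assumes "ez f" shows "Sum_any f = f 0 + Sum_any (\<lambda>j. f (Suc j))"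
proof -
  obtain N where 1: "\<forall>j\<ge>N. f j = 0" using assms unfolding ez_def by blast
  have "Sum_any f = sum f {..<Suc N}" by (rule ez_Sum_any) (use 1 in auto)
  moreover have "Sum_any (\<lambda>j. f (Suc j)) = sum (\<lambda>j. f (Suc j)) {..<N}" by (rule ez_Sum_any) (use 1 in auto)
  ultimately show ?thesis by (metis sum.lessThan_Suc_shift)
qed

lemma ez_single:
  fixes f :: "nat \<Rightarrow> 'a::comm_monoid_add"
  assumes "\<And>j. j > 0 \<Longrightarrow> f j = 0" shows "Sum_any f = f 0"
proof -
  have "Sum_any f = sum f {..<1}" by (rule ez_Sum_any) (use assms in auto)
  then show ?thesis by simp
qed

lemma ez_Suc: "ez f \<Longrightarrow> ez (\<lambda>j. f (Suc j))"
  unfolding ez_def by (metis le_SucI)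

lemma ez_mono: "ez f \<Longrightarrow> (\<And>j. f j = 0 \<Longrightarrow> g j = 0) \<Longrightarrow> ez g"
  unfolding ez_def by metis

lemma ez_int: "\<exists>N. \<forall>n\<ge>N. h n = 0 \<Longrightarrow> ez (\<lambda>j. h (m + int j))"
  unfolding ez_def
proof -
  assume "\<exists>N. \<forall>n\<ge>N. h n = 0"
  then obtain N where N: "\<forall>n\<ge>N. h n = 0" by blast
  show "\<exists>M. \<forall>j\<ge>M. h (m + int j) = 0"
    by (rule exI[of _ "nat (N - m)"]) (use N in auto)
qed

lemma vs_module: "vector_space s \<Longrightarrow> module s"
  by (simp add: module_iff_vector_space)

lemma ez_scale:
  assumes "vector_space s" "ez f"
  shows "s c (Sum_any f) = Sum_any (\<lambda>j. s c (f j))"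
proof -
  interpret module s using assms(1) by (rule vs_module)
  obtain N where 1: "\<forall>j\<ge>N. f j = 0" using assms(2) unfolding ez_def by blast
  have "Sum_any f = sum f {..<N}" by (rule ez_Sum_any) (use 1 in auto)
  moreover have "Sum_any (\<lambda>j. s c (f j)) = sum (\<lambda>j. s c (f j)) {..<N}" by (rule ez_Sum_any) (use 1 in auto)
  ultimately show ?thesis by (simp add: scale_sum_right)
qed

lemma lin_add: "Vector_Spaces.linear s1 s2 f \<Longrightarrow> f (x + y) = f x + f y"
  by (simp add: Vector_Spaces.linear_iff)
lemma lin_scale: "Vector_Spaces.linear s1 s2 f \<Longrightarrow> f (s1 c x) = s2 c (f x)"
  by (simp add: Vector_Spaces.linear_iff)
lemma lin_0: "Vector_Spaces.linear s1 s2 f \<Longrightarrow> f 0 = 0"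
  by (metis add_cancel_right_right add_0 lin_add)

lemma YY_trunc:
  assumes "in_series_S S (\<lambda>n. (f::complex \<Rightarrow> 'c::zero) n)"
  shows "ez (\<lambda>j. f (k + of_nat j))"
proof -
  obtain D where D: "finite D" "\<forall>n. f n \<noteq> 0 \<longrightarrow> (\<exists>d\<in>D. \<exists>j::nat. - n - 1 = - d + of_nat j)"
    using assms unfolding in_series_S_def by blast
  define B where "B = Max (insert 0 (Re ` D))"
  have B: "\<And>d. d \<in> D \<Longrightarrow> Re d \<le> B" unfolding B_def using D(1) by auto
  show ?thesis unfolding ez_def
  proof (rule exI[of _ "nat \<lceil>B - Re k\<rceil>"], intro allI impI)
    fix j assume j: "nat \<lceil>B - Re k\<rceil> \<le> j"
    show "f (k + of_nat j) = 0"
    proof (rule ccontr)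
      assume "f (k + of_nat j) \<noteq> 0"
      then obtain d j' where d: "d \<in> D" and e: "- (k + of_nat j) - 1 = - d + of_nat (j'::nat)" using D(2) by blast
      have "Re (- (k + of_nat j) - 1) = Re (- d + of_nat j')" using e by simp
      then have "Re d = Re k + j + 1 + j'" by simp
      moreover have "real j \<ge> B - Re k" using j by linarith
      ultimately show False using B[OF d] by simp
    qed
  qed
qed


lemma SA_neg: "Sum_any (\<lambda>j. - (f j :: 'a::ab_group_add)) = - Sum_any f"
  unfolding Sum_any.expand_set by (simp add: sum_negf)

lemma m1pow_Suc: "(-1::complex) powi (z + 1) = - ((-1) powi z)"
  by (simp add: power_int_minus_left)

locale setting =
  fixes s1 :: "complex \<Rightarrow> 'm1::ab_group_add \<Rightarrow> 'm1"
    and s2 :: "complex \<Rightarrow> 'm2::ab_group_add \<Rightarrow> 'm2"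
    and s3 :: "complex \<Rightarrow> 'm3::ab_group_add \<Rightarrow> 'm3"
    and Y1 :: "'v \<Rightarrow> int \<Rightarrow> 'm1 \<Rightarrow> 'm1"
    and Y2 :: "'v \<Rightarrow> int \<Rightarrow> 'm2 \<Rightarrow> 'm2"
    and Y3 :: "'v \<Rightarrow> int \<Rightarrow> 'm3 \<Rightarrow> 'm3"
    and YY :: "'m1 \<Rightarrow> complex \<Rightarrow> 'm2 \<Rightarrow> 'm3"
    and TV :: "'v \<Rightarrow> 'v"
  assumes vs3: "vector_space s3"
    and lin3: "\<And>v n. Vector_Spaces.linear s3 s3 (Y3 v n)"
    and lin1YY: "\<And>n b. Vector_Spaces.linear s1 s3 (\<lambda>a. YY a n b)"
    and lin2YY: "\<And>a n. Vector_Spaces.linear s2 s3 (YY a n)"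
    and trYY: "\<And>a b k. ez (\<lambda>j. YY a (k + of_nat j) b)"
    and tr1: "\<And>v a. \<exists>N. \<forall>n\<ge>N. Y1 v n a = 0"
    and tr2: "\<And>v b. \<exists>N. \<forall>n\<ge>N. Y2 v n b = 0"
    and d1: "\<And>v n x. Y1 (TV v) n x = s1 (- of_int n) (Y1 v (n - 1) x)"
    and d2: "\<And>v n x. Y2 (TV v) n x = s2 (- of_int n) (Y2 v (n - 1) x)"
    and d3: "\<And>v n x. Y3 (TV v) n x = s3 (- of_int n) (Y3 v (n - 1) x)"
begin

interpretation M3: module s3 using vs3 by (rule vs_module)

definition JA where "JA v a b n m k = (\<Sum>j::nat. s3 ((-1) ^ j * ((of_int n :: complex) gchoose j))
                    (Y3 v (m + n - int j) (YY a (k + of_nat j) b)))"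
definition JB where "JB v a b n m k = (\<Sum>j::nat. s3 ((-1::complex) powi (n + int j) * ((of_int n :: complex) gchoose j))
                    (YY a (k + of_int n - of_nat j) (Y2 v (m + int j) b)))"
definition JC where "JC v a b n m k = (\<Sum>i::nat. s3 ((of_int m :: complex) gchoose i)
                    (YY (Y1 v (n + int i) a) (of_int m + k - of_nat i) b))"
definition DD where "DD v a b n m k = JA v a b n m k - JB v a b n m k - JC v a b n m k"

lemma jc_iff: "jacobi_coeff s3 Y3 YY Y2 Y1 v a b n m k \<longleftrightarrow> DD v a b n m k = 0"
  unfolding jacobi_coeff_def DD_def JA_def JB_def JC_def by (rule eq_iff_diff_eq_0)

lemma ezA: "ez (\<lambda>j. s3 (c j) (Y3 v (q j) (YY a (k + of_nat j) b)))"
  by (rule ez_mono[OF trYY[of a k b]]) (simp add: lin_0[OF lin3])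

lemma ezB: "ez (\<lambda>j. s3 (c j) (YY a (r j) (Y2 v (m + int j) b)))"
  by (rule ez_mono[OF ez_int[OF tr2[of v b], of m]]) (simp add: lin_0[OF lin2YY])

lemma ezC: "ez (\<lambda>i. s3 (c i) (YY (Y1 v (n + int i) a) (r i) b))"
proof (rule ez_mono[OF ez_int[OF tr1[of v a], of n]])
  fix j assume "Y1 v (n + int j) a = 0"
  then show "s3 (c j) (YY (Y1 v (n + int j) a) (r j) b) = 0"
    using lin_0[OF lin1YY, of "r j" b] by simp
qed


lemma recA: "JA v a b (n+1) m k = JA v a b n (m+1) k - JA v a b n m (k+1)"
proof -
  define f where "f = (\<lambda>j::nat. s3 ((-1) ^ j * ((of_int (n+1) :: complex) gchoose j))
                    (Y3 v (m + (n+1) - int j) (YY a (k + of_nat j) b)))"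
  define g where "g = (\<lambda>j::nat. s3 ((-1) ^ j * ((of_int n :: complex) gchoose j))
                    (Y3 v ((m+1) + n - int j) (YY a (k + of_nat j) b)))"
  define h where "h = (\<lambda>j::nat. s3 ((-1) ^ j * ((of_int n :: complex) gchoose j))
                    (Y3 v (m + n - int j) (YY a ((k+1) + of_nat j) b)))"
  have ef: "ez f" unfolding f_def by (rule ezA)
  have eg: "ez g" unfolding g_def by (rule ezA)
  have eh: "ez h" unfolding h_def by (rule ezA)
  have pt: "f (Suc j) = g (Suc j) - h j" for j
  proof -
    have i1: "m + (n+1) - int (Suc j) = m + n - int j" "m + 1 + n - int (Suc j) = m + n - int j" by simp_all
    have i3: "k + of_nat (Suc j) = k + 1 + of_nat j" by simp
    have co: "(-1::complex)^Suc j * (of_int (n+1) gchoose Suc j)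
        = (-1)^Suc j * (of_int n gchoose Suc j) - (-1)^j * (of_int n gchoose j)"
      using gbinomial_Suc_Suc[of "of_int n :: complex" j] by (simp add: algebra_simps)
    show ?thesis unfolding f_def g_def h_def i1 i3 co by (rule M3.scale_left_diff_distrib)
  qed
  have f0: "f 0 = g 0" unfolding f_def g_def by (simp add: add.commute add.left_commute)
  have "Sum_any (\<lambda>j. f (Suc j)) = Sum_any (\<lambda>j. g (Suc j) - h j)" using pt by simp
  also have "\<dots> = Sum_any (\<lambda>j. g (Suc j)) - Sum_any h" by (rule ez_diff[OF ez_Suc[OF eg] eh])
  finally have "Sum_any f = Sum_any g - Sum_any h"
    using ez_shift[OF ef] ez_shift[OF eg] f0 by (simp add: algebra_simps)
  then show ?thesis unfolding JA_def f_def g_def h_def by simp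
qed

lemma recB: "JB v a b (n+1) m k = JB v a b n (m+1) k - JB v a b n m (k+1)"
proof -
  define f where "f = (\<lambda>j::nat. s3 ((-1::complex) powi ((n+1) + int j) * ((of_int (n+1) :: complex) gchoose j))
                    (YY a (k + of_int (n+1) - of_nat j) (Y2 v (m + int j) b)))"
  define g where "g = (\<lambda>j::nat. s3 ((-1::complex) powi (n + int j) * ((of_int n :: complex) gchoose j))
                    (YY a (k + of_int n - of_nat j) (Y2 v ((m+1) + int j) b)))"
  define h where "h = (\<lambda>j::nat. s3 ((-1::complex) powi (n + int j) * ((of_int n :: complex) gchoose j))
                    (YY a ((k+1) + of_int n - of_nat j) (Y2 v (m + int j) b)))"
  have ef: "ez f" unfolding f_def by (rule ezB)
  have eg: "ez g" unfolding g_def by (rule ezB)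
  have eh: "ez h" unfolding h_def by (rule ezB)
  have pt: "f (Suc j) = g j - h (Suc j)" for j
  proof -
    have i1: "k + of_int (n+1) - of_nat (Suc j) = k + of_int n - of_nat j"
             "k + 1 + of_int n - of_nat (Suc j) = k + of_int n - of_nat j" by simp_all
    have i2: "m + int (Suc j) = m + 1 + int j" by simp
    have s1: "(-1::complex) powi ((n+1) + int (Suc j)) = (-1) powi (n + int j)"
      by (simp add: power_int_minus_left)
    have s2: "(-1::complex) powi (n + int (Suc j)) = - ((-1) powi (n + int j))"
      by (simp add: power_int_minus_left)
    have co: "(-1::complex) powi ((n+1) + int (Suc j)) * (of_int (n+1) gchoose Suc j)
        = (-1) powi (n + int j) * (of_int n gchoose j) - (-1) powi (n + int (Suc j)) * (of_int n gchoose Suc j)"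
      unfolding s1 s2 using gbinomial_Suc_Suc[of "of_int n :: complex" j] by (simp add: algebra_simps)
    show ?thesis unfolding f_def g_def h_def i1 i2 co by (rule M3.scale_left_diff_distrib)
  qed
  have f0: "f 0 = - h 0" unfolding f_def h_def
    by (simp add: add.commute add.left_commute power_int_minus_left)
  have "Sum_any (\<lambda>j. f (Suc j)) = Sum_any (\<lambda>j. g j - h (Suc j))" using pt by simp
  also have "\<dots> = Sum_any g - Sum_any (\<lambda>j. h (Suc j))" by (rule ez_diff[OF eg ez_Suc[OF eh]])
  finally have X: "Sum_any (\<lambda>j. f (Suc j)) = Sum_any g - Sum_any (\<lambda>j. h (Suc j))" .
  have "Sum_any f = f 0 + Sum_any (\<lambda>j. f (Suc j))" by (rule ez_shift[OF ef])
  also have "\<dots> = - h 0 + (Sum_any g - Sum_any (\<lambda>j. h (Suc j)))" using f0 X by simp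
  also have "\<dots> = Sum_any g - (h 0 + Sum_any (\<lambda>j. h (Suc j)))" by (simp add: algebra_simps)
  also have "\<dots> = Sum_any g - Sum_any h" using ez_shift[OF eh] by simp
  finally have "Sum_any f = Sum_any g - Sum_any h" .
  then show ?thesis unfolding JB_def f_def g_def h_def by simp
qed

lemma recC: "JC v a b (n+1) m k = JC v a b n (m+1) k - JC v a b n m (k+1)"
proof -
  define f where "f = (\<lambda>i::nat. s3 ((of_int m :: complex) gchoose i)
                    (YY (Y1 v ((n+1) + int i) a) (of_int m + k - of_nat i) b))"
  define g where "g = (\<lambda>i::nat. s3 ((of_int (m+1) :: complex) gchoose i)
                    (YY (Y1 v (n + int i) a) (of_int (m+1) + k - of_nat i) b))"
  define h where "h = (\<lambda>i::nat. s3 ((of_int m :: complex) gchoose i)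
                    (YY (Y1 v (n + int i) a) (of_int m + (k+1) - of_nat i) b))"
  have ef: "ez f" unfolding f_def by (rule ezC)
  have eg: "ez g" unfolding g_def by (rule ezC)
  have eh: "ez h" unfolding h_def by (rule ezC)
  have pt: "f i = g (Suc i) - h (Suc i)" for i
  proof -
    have i1: "of_int (m+1) + k - of_nat (Suc i) = of_int m + k - of_nat i"
             "of_int m + (k+1) - of_nat (Suc i) = of_int m + k - of_nat i" by simp_all
    have i2: "n + int (Suc i) = n + 1 + int i" by simp
    have co: "(of_int m :: complex) gchoose i = (of_int (m+1) gchoose Suc i) - (of_int m gchoose Suc i)"
      using gbinomial_Suc_Suc[of "of_int m :: complex" i] by (simp add: algebra_simps)
    show ?thesis unfolding f_def g_def h_def i1 i2 co[symmetric] 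
      by (subst co) (rule M3.scale_left_diff_distrib)
  qed
  have f0: "g 0 = h 0" unfolding g_def h_def by (simp add: add.commute add.left_commute)
  have "Sum_any f = Sum_any (\<lambda>j. g (Suc j) - h (Suc j))" using pt by simp
  also have "\<dots> = Sum_any (\<lambda>j. g (Suc j)) - Sum_any (\<lambda>j. h (Suc j))" by (rule ez_diff[OF ez_Suc[OF eg] ez_Suc[OF eh]])
  finally have "Sum_any f = Sum_any g - Sum_any h"
    using ez_shift[OF eg] ez_shift[OF eh] f0 by (simp add: algebra_simps)
  then show ?thesis unfolding JC_def f_def g_def h_def by simp
qed

lemma recD: "DD v a b (n+1) m k = DD v a b n (m+1) k - DD v a b n m (k+1)"
  unfolding DD_def recA recB recC by (simp add: algebra_simps)


lemma TA: "JA (TV v) a b n 0 k = s3 (- of_int n) (JA v a b (n-1) 0 k)"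
proof -
  have "s3 (- of_int n) (JA v a b (n-1) 0 k) = Sum_any (\<lambda>j. s3 (- of_int n) (s3 ((-1) ^ j * ((of_int (n-1) :: complex) gchoose j))
                    (Y3 v (0 + (n-1) - int j) (YY a (k + of_nat j) b))))"
    unfolding JA_def by (rule ez_scale[OF vs3 ezA])
  also have "\<dots> = JA (TV v) a b n 0 k" unfolding JA_def
  proof (rule Sum_any.cong)
    fix j
    have e: "(of_int n - of_nat j :: complex) * (of_int n gchoose j) = of_int n * ((of_int n - 1) gchoose j)"
      by (rule gbinomial_absorb_comp)
    have c1: "of_int (0 + n - int j) = (of_int n - of_nat j :: complex)" "of_int (n-1) = (of_int n - 1::complex)" by simp_all
    have co: "(-1::complex)^j * (of_int n gchoose j) * (- of_int (0 + n - int j)) = - of_int n * ((-1)^j * (of_int (n-1) gchoose j))"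
    proof -
      have "(-1::complex)^j * (of_int n gchoose j) * (- of_int (0 + n - int j))
          = - ((-1)^j * ((of_int n - of_nat j :: complex) * (of_int n gchoose j)))" unfolding c1 by algebra
      also have "\<dots> = - ((-1)^j * (of_int n * ((of_int n - 1) gchoose j)))" by (simp only: e)
      also have "\<dots> = - of_int n * ((-1)^j * (of_int (n-1) gchoose j))" unfolding c1 by algebra
      finally show ?thesis .
    qed
    have i: "0 + n - int j - 1 = 0 + (n - 1) - int j" by simp
    show "s3 (- of_int n) (s3 ((-1)^j * (of_int (n-1) gchoose j)) (Y3 v (0 + (n-1) - int j) (YY a (k + of_nat j) b)))
       = s3 ((-1)^j * (of_int n gchoose j)) (Y3 (TV v) (0 + n - int j) (YY a (k + of_nat j) b))"
      unfolding d3 i M3.scale_scale co ..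
  qed
  finally show ?thesis ..
qed

lemma TB: "JB (TV v) a b n 0 k = s3 (- of_int n) (JB v a b (n-1) 0 k)"
proof -
  define f where "f = (\<lambda>j::nat. s3 ((-1::complex) powi (n + int j) * ((of_int n :: complex) gchoose j))
                    (YY a (k + of_int n - of_nat j) (Y2 (TV v) (0 + int j) b)))"
  have ef: "ez f" unfolding f_def by (rule ezB)
  have f0: "f 0 = 0" unfolding f_def d2 by (simp add: lin_scale[OF lin2YY])
  have "s3 (- of_int n) (JB v a b (n-1) 0 k) = Sum_any (\<lambda>i. s3 (- of_int n) (s3 ((-1::complex) powi ((n-1) + int i) * ((of_int (n-1) :: complex) gchoose i))
                    (YY a (k + of_int (n-1) - of_nat i) (Y2 v (0 + int i) b))))"
    unfolding JB_def by (rule ez_scale[OF vs3 ezB])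
  also have "\<dots> = Sum_any (\<lambda>i. f (Suc i))"
  proof (rule Sum_any.cong)
    fix i
    have p: "n + int (Suc i) = ((n - 1) + int i) + 1 + 1" by simp
    have co: "(-1::complex) powi (n + int (Suc i)) * (of_int n gchoose Suc i) * (- of_int (0 + int (Suc i)))
       = - of_int n * ((-1) powi (n - 1 + int i) * (of_int (n-1) gchoose i))"
    proof -
      have e: "of_nat (Suc i) * ((of_int n :: complex) gchoose Suc i) = of_int n * ((of_int n - 1) gchoose i)"
        by (rule gbinomial_absorption)
      have c1: "of_int (0 + int (Suc i)) = (of_nat (Suc i) :: complex)" "of_int (n-1) = (of_int n - 1::complex)" by simp_all
      have "(-1::complex) powi (n + int (Suc i)) * (of_int n gchoose Suc i) * (- of_int (0 + int (Suc i)))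
          = - ((-1) powi (n - 1 + int i)) * (of_nat (Suc i) * (of_int n gchoose Suc i))"
        unfolding p m1pow_Suc c1 by algebra
      also have "\<dots> = - ((-1) powi (n - 1 + int i)) * (of_int n * ((of_int n - 1) gchoose i))" by (simp only: e)
      also have "\<dots> = - of_int n * ((-1) powi (n - 1 + int i) * (of_int (n-1) gchoose i))" unfolding c1 by algebra
      finally show ?thesis .
    qed
    have i1: "k + of_int n - of_nat (Suc i) = k + of_int (n-1) - of_nat i" by simp
    have i2: "0 + int (Suc i) - 1 = 0 + int i" by simp
    show "s3 (- of_int n) (s3 ((-1::complex) powi ((n-1) + int i) * ((of_int (n-1) :: complex) gchoose i))
                    (YY a (k + of_int (n-1) - of_nat i) (Y2 v (0 + int i) b))) = f (Suc i)"
      unfolding f_def d2 lin_scale[OF lin2YY] i1 i2 M3.scale_scale co ..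
  qed
  also have "\<dots> = JB (TV v) a b n 0 k" unfolding JB_def f_def[symmetric] using ez_shift[OF ef] f0 by simp
  finally show ?thesis ..
qed

lemma JC0: "JC w a b n 0 k = YY (Y1 w n a) k b"
  unfolding JC_def by (subst ez_single) (auto simp: gbinomial_0_left)

lemma TC: "JC (TV v) a b n 0 k = s3 (- of_int n) (JC v a b (n-1) 0 k)"
  unfolding JC0 d1 by (simp add: lin_scale[OF lin1YY])

lemma DT: "DD (TV v) a b n 0 k = s3 (- of_int n) (DD v a b (n-1) 0 k)"
  unfolding DD_def TA TB TC by (simp add: M3.scale_right_diff_distrib)

lemma JA0: "JA v a b 0 m k = Y3 v m (YY a k b)"
  unfolding JA_def by (subst ez_single) (auto simp: gbinomial_0_left)

lemma JB0: "JB v a b 0 m k = YY a k (Y2 v m b)"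
  unfolding JB_def by (subst ez_single) (auto simp: gbinomial_0_left)

lemma gm1: "((-1::complex) gchoose j) = (-1)^j"
proof -
  have "(of_nat j :: complex) gchoose j = 1" using binomial_gbinomial[of j j, where 'a=complex] by simp
  then show ?thesis using gbinomial_negated_upper[of "-1::complex" j] by simp
qed

lemma JAm1: "JA v a b (-1) 0 k = Sum_any (\<lambda>j::nat. Y3 v (-1 - int j) (YY a (k + of_nat j) b))"
  unfolding JA_def by (rule Sum_any.cong) (simp add: gm1 flip: power_mult_distrib)

lemma JBm1: "JB v a b (-1) 0 k = - Sum_any (\<lambda>j::nat. YY a (k - 1 - of_nat j) (Y2 v (int j) b))"
proof -
  have "JB v a b (-1) 0 k = Sum_any (\<lambda>j::nat. - YY a (k - 1 - of_nat j) (Y2 v (int j) b))"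
    unfolding JB_def
  proof (rule Sum_any.cong)
    fix j
    have "(-1::complex) powi (-1 + int j) = (-1) powi (-1) * (-1) powi (int j)" by (rule power_int_add) simp
    then have "(-1::complex) powi (-1 + int j) = - ((-1)^j)" by simp
    then have "(-1::complex) powi (-1 + int j) * (of_int (-1) gchoose j) = -1"
      by (simp add: gm1 flip: power_mult_distrib)
    then show "s3 ((-1::complex) powi (-1 + int j) * (of_int (-1) gchoose j)) (YY a (k + of_int (-1) - of_nat j) (Y2 v (0 + int j) b))
        = - YY a (k - 1 - of_nat j) (Y2 v (int j) b)" by simp
  qed
  then show ?thesis by (simp add: SA_neg)
qed

lemma main_back:
  assumes C: "\<And>v a b m k. commutator_coeff s3 Y3 YY Y2 Y1 v a b m k"
    and N: "\<And>v a b k. normal_order_coeff Y3 YY Y2 Y1 v a b k"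
  shows "DD v a b n m k = 0"
proof -
  have D0: "DD v a b 0 m k = 0" for v m k
    using C[of v a b m k] unfolding commutator_coeff_def DD_def JA0 JB0 JC_def by simp
  have Dm1: "DD v a b (-1) 0 k = 0" for v k
    using N[of v a b k] unfolding normal_order_coeff_def DD_def JAm1 JBm1 JC0 by simp
  have Dneg0: "\<forall>v k. DD v a b (-1 - int p) 0 k = 0" for p
  proof (induction p)
    case 0 then show ?case using Dm1 by simp
  next
    case (Suc p)
    show ?case
    proof (intro allI)
      fix v k
      have "s3 (- of_int (-1 - int p)) (DD v a b (-1 - int p - 1) 0 k) = 0"
        using DT[of v a b "-1 - int p" k] Suc by simp
      moreover have "(- of_int (-1 - int p) :: complex) \<noteq> 0"
      proof -
        have "(of_nat (Suc p)::complex) \<noteq> 0" by (rule of_nat_neq_0)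
        then show ?thesis by (simp add: add.commute)
      qed
      moreover have "-1 - int p - 1 = -1 - int (Suc p)" by simp
      ultimately show "DD v a b (-1 - int (Suc p)) 0 k = 0"
        using vector_space.scale_eq_0_iff[OF vs3] by metis
    qed
  qed
  have Dpos: "\<forall>v m k. DD v a b (int p) m k = 0" for p
  proof (induction p)
    case 0 then show ?case using D0 by simp
  next
    case (Suc p) then show ?case using recD[of _ a b "int p"] by (simp add: add.commute)
  qed
  have step: "\<forall>m k. DD v a b n m k = 0"
    if H1: "\<forall>m k. DD v a b (n+1) m k = 0" and H2: "\<forall>k. DD v a b n 0 k = 0" for v n
  proof -
    have sh: "DD v a b n (m+1) k = DD v a b n m (k+1)" for m k
      using recD[of v a b n m k] H1 by simp
    have up: "\<forall>k. DD v a b n (int q) k = 0" for q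
    proof (induction q)
      case 0 then show ?case using H2 by simp
    next
      case (Suc q) then show ?case using sh[of "int q"] by (simp add: add.commute)
    qed
    have down: "\<forall>k. DD v a b n (- int q) k = 0" for q
    proof (induction q)
      case 0 then show ?case using H2 by simp
    next
      case (Suc q)
      show ?case
      proof
        fix k
        have "DD v a b n (- int (Suc q) + 1) (k - 1) = DD v a b n (- int (Suc q)) k"
          using sh[of "- int (Suc q)" "k - 1"] by simp
        moreover have "- int (Suc q) + 1 = - int q" by simp
        ultimately show "DD v a b n (- int (Suc q)) k = 0" using Suc by simp
      qed
    qed
    show ?thesis
    proof (intro allI)
      fix m k
      show "DD v a b n m k = 0"
      proof (cases "m \<ge> 0")
        case True then show ?thesis using up[of "nat m"] by simp
      next
        case False then show ?thesis using down[of "nat (- m)"] by simp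
      qed
    qed
  qed
  have Dneg: "\<forall>v m k. DD v a b (-1 - int p) m k = 0" for p
  proof (induction p)
    case 0 then show ?case using step[of _ "-1"] Dpos[of 0] Dneg0[of 0] by simp
  next
    case (Suc p)
    have "-1 - int (Suc p) + 1 = -1 - int p" by simp
    then show ?case using step[of _ "-1 - int (Suc p)"] Suc Dneg0[of "Suc p"] by simp
  qed
  show ?thesis
  proof (cases "n \<ge> 0")
    case True then show ?thesis using Dpos[of "nat n"] by simp
  next
    case False
    then have "n = -1 - int (nat (- n - 1))" by simp
    then show ?thesis using Dneg[of "nat (- n - 1)"] by metis
  qed
qed

end
lemma cm2: "(-1::complex)^j * (of_int (-2) gchoose j) = of_nat (Suc j)"
proof -
  have "(of_nat (Suc j) :: complex) gchoose j = of_nat (Suc j)" using binomial_gbinomial[of "Suc j" j, where 'a=complex] by simp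
  then have "((-2::complex) gchoose j) = (-1)^j * of_nat (Suc j)" using gbinomial_negated_upper[of "-2::complex" j] by (simp add: add.commute)
  then show ?thesis by (simp flip: power_mult_distrib)
qed
lemma cm2': "(-1::complex) powi (-2 + int j) * (of_int (-2) gchoose j) = of_nat (Suc j)"
proof -
  have "(-1::complex) powi (-2 + int j) = (-1) powi (-2) * (-1) powi (int j)" by (rule power_int_add) simp
  then have "(-1::complex) powi (-2 + int j) = (-1)^j" by (simp add: power_int_minus)
  then show ?thesis using cm2 by simp
qed

lemma Sum_any_single:
  fixes f :: "nat \<Rightarrow> 'a::comm_monoid_add"
  assumes "\<And>j. j \<noteq> j0 \<Longrightarrow> f j = 0" shows "Sum_any f = f j0"
proof -
  have "Sum_any f = sum f {j0}" by (rule Sum_any.expand_superset) (use assms in auto)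
  then show ?thesis by simp
qed

lemma mod_deriv:
  assumes VA: "vertex_algebra sV vac TV Y" and M: "va_module sV vac Y sM TM YM"
  shows "YM (TV v) n x = sM (- of_int n) (YM v (n-1) x)"
proof -
  have vsV: "vector_space sV" and linV: "\<And>v n. Vector_Spaces.linear sV sV (Y v n)"
    and Yvac: "Y v (-1) vac = v" and TVvac: "TV vac = 0"
    and Tder: "\<And>v n w. TV (Y v n w) - Y v n (TV w) = sV (- of_int n) (Y v (n - 1) w)"
    using VA unfolding vertex_algebra_def by auto
  have vsM: "vector_space sM" and linM: "\<And>v n. Vector_Spaces.linear sM sM (YM v n)"
    and vacM: "\<And>n x. YM vac n x = (if n = -1 then x else 0)"
    and J: "\<And>v a x n m k. jacobi_coeff sM YM YM YM Y v a x n m k"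
    using M unfolding va_module_def by auto
  interpret MM: module sM using vsM by (rule vs_module)
  interpret VV: module sV using vsV by (rule vs_module)
  have TVv: "TV v = Y v (-2) vac"
    using Tder[of v "-1" vac] by (simp add: Yvac TVvac lin_0[OF linV])
  have J1: "jacobi_coeff sM YM YM YM Y v vac x (-2) 0 n" by (rule J)
  have J3: "Sum_any (\<lambda>j. sM ((-1)^j * ((of_int (-2)::complex) gchoose j)) (YM v (-2 - int j) (YM vac (n + int j) x)))
     - Sum_any (\<lambda>j. sM ((-1::complex) powi (-2 + int j) * (of_int (-2) gchoose j)) (YM vac (n - 2 - int j) (YM v (int j) x)))
     = Sum_any (\<lambda>i. sM ((of_int 0::complex) gchoose i) (YM (Y v (-2 + int i) vac) (n - int i) x))"
    using J1 unfolding jacobi_coeff_def by (simp add: algebra_simps)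
  have L3: "Sum_any (\<lambda>i. sM ((of_int 0::complex) gchoose i) (YM (Y v (-2 + int i) vac) (n - int i) x)) = YM (TV v) n x"
    unfolding TVv by (subst ez_single) (auto simp: gbinomial_0_left)
  have L1: "Sum_any (\<lambda>j. sM ((-1)^j * ((of_int (-2)::complex) gchoose j)) (YM v (-2 - int j) (YM vac (n + int j) x)))
      = (if n \<le> -1 then sM (- of_int n) (YM v (n-1) x) else 0)"
  proof (cases "n \<le> -1")
    case True
    define j0 where "j0 = nat (-1 - n)"
    have j0: "n + int j0 = -1" "-2 - int j0 = n - 1" "(of_nat (Suc j0) :: complex) = - of_int n"
      using True unfolding j0_def by (simp_all add: of_nat_nat)
    have "Sum_any (\<lambda>j. sM ((-1)^j * ((of_int (-2)::complex) gchoose j)) (YM v (-2 - int j) (YM vac (n + int j) x)))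
        = sM ((-1)^j0 * ((of_int (-2)::complex) gchoose j0)) (YM v (-2 - int j0) (YM vac (n + int j0) x))"
    proof (rule Sum_any_single)
      fix j assume "j \<noteq> j0"
      then have "n + int j \<noteq> -1" using True unfolding j0_def by auto
      then show "sM ((-1)^j * ((of_int (-2)::complex) gchoose j)) (YM v (-2 - int j) (YM vac (n + int j) x)) = 0"
        by (simp add: vacM lin_0[OF linM])
    qed
    also have "\<dots> = sM (- of_int n) (YM v (n-1) x)" unfolding cm2 j0(3) by (simp add: vacM j0(1,2))
    finally show ?thesis using True by simp
  next
    case False
    have "Sum_any (\<lambda>j. sM ((-1)^j * ((of_int (-2)::complex) gchoose j)) (YM v (-2 - int j) (YM vac (n + int j) x)))
       = Sum_any (\<lambda>j::nat. 0)"
    proof (rule Sum_any.cong)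
      fix j
      have "n + int j \<noteq> -1" using False by auto
      then show "sM ((-1)^j * ((of_int (-2)::complex) gchoose j)) (YM v (-2 - int j) (YM vac (n + int j) x)) = 0"
        by (simp add: vacM lin_0[OF linM])
    qed
    then show ?thesis using False by simp
  qed
  have L2: "Sum_any (\<lambda>j. sM ((-1::complex) powi (-2 + int j) * (of_int (-2) gchoose j)) (YM vac (n - 2 - int j) (YM v (int j) x)))
      = (if n \<ge> 1 then sM (of_int n) (YM v (n-1) x) else 0)"
  proof (cases "n \<ge> 1")
    case True
    define j0 where "j0 = nat (n - 1)"
    have j0: "n - 2 - int j0 = -1" "int j0 = n - 1" "(of_nat (Suc j0) :: complex) = of_int n"
      using True unfolding j0_def by (simp_all add: of_nat_nat)
    have "Sum_any (\<lambda>j. sM ((-1::complex) powi (-2 + int j) * (of_int (-2) gchoose j)) (YM vac (n - 2 - int j) (YM v (int j) x)))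
        = sM ((-1::complex) powi (-2 + int j0) * (of_int (-2) gchoose j0)) (YM vac (n - 2 - int j0) (YM v (int j0) x))"
    proof (rule Sum_any_single)
      fix j assume "j \<noteq> j0"
      then have "n - 2 - int j \<noteq> -1" using True unfolding j0_def by auto
      then show "sM ((-1::complex) powi (-2 + int j) * (of_int (-2) gchoose j)) (YM vac (n - 2 - int j) (YM v (int j) x)) = 0"
        by (simp add: vacM)
    qed
    also have "\<dots> = sM (of_int n) (YM v (n-1) x)" unfolding cm2' j0(3) by (simp add: vacM j0(1,2))
    finally show ?thesis using True by simp
  next
    case False
    have "Sum_any (\<lambda>j. sM ((-1::complex) powi (-2 + int j) * (of_int (-2) gchoose j)) (YM vac (n - 2 - int j) (YM v (int j) x)))
       = Sum_any (\<lambda>j::nat. 0)"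
    proof (rule Sum_any.cong)
      fix j
      have "n - 2 - int j \<noteq> -1" using False by auto
      then show "sM ((-1::complex) powi (-2 + int j) * (of_int (-2) gchoose j)) (YM vac (n - 2 - int j) (YM v (int j) x)) = 0"
        by (simp add: vacM)
    qed
    then show ?thesis using False by simp
  qed
  have "YM (TV v) n x = (if n \<le> -1 then sM (- of_int n) (YM v (n-1) x) else 0) - (if n \<ge> 1 then sM (of_int n) (YM v (n-1) x) else 0)"
    using J3 unfolding L1 L2 L3 by simp
  then show ?thesis
  proof (cases "n \<le> -1")
    case False
    show ?thesis
    proof (cases "n \<ge> 1")
      case False
      with \<open>\<not> n \<le> -1\<close> have "n = 0" by simp
      then show ?thesis using \<open>YM (TV v) n x = _\<close> by simp
    qed (use \<open>YM (TV v) n x = _\<close> in auto)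
  qed auto
qed

theorem proposition3p7:
  fixes sV :: "complex \<Rightarrow> 'v::ab_group_add \<Rightarrow> 'v" and vac :: 'v
    and TV :: "'v \<Rightarrow> 'v" and Y :: "'v \<Rightarrow> int \<Rightarrow> 'v \<Rightarrow> 'v"
    and s1 :: "complex \<Rightarrow> 'm1::ab_group_add \<Rightarrow> 'm1" and T1 :: "'m1 \<Rightarrow> 'm1"
    and Y1 :: "'v \<Rightarrow> int \<Rightarrow> 'm1 \<Rightarrow> 'm1"
    and s2 :: "complex \<Rightarrow> 'm2::ab_group_add \<Rightarrow> 'm2" and T2 :: "'m2 \<Rightarrow> 'm2"
    and Y2 :: "'v \<Rightarrow> int \<Rightarrow> 'm2 \<Rightarrow> 'm2"
    and s3 :: "complex \<Rightarrow> 'm3::ab_group_add \<Rightarrow> 'm3" and T3 :: "'m3 \<Rightarrow> 'm3"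
    and Y3 :: "'v \<Rightarrow> int \<Rightarrow> 'm3 \<Rightarrow> 'm3"
    and S :: "complex set"
    and YY :: "'m1 \<Rightarrow> complex \<Rightarrow> 'm2 \<Rightarrow> 'm3"
  assumes VA: "vertex_algebra sV vac TV Y"
    and M1: "va_module sV vac Y s1 T1 Y1"
    and M2: "va_module sV vac Y s2 T2 Y2"
    and M3: "va_module sV vac Y s3 T3 Y3"
    and S: "admissible_exponents S"
    and YY_lin1: "\<And>n b. Vector_Spaces.linear s1 s3 (\<lambda>a. YY a n b)"
    and YY_lin2: "\<And>a n. Vector_Spaces.linear s2 s3 (YY a n)"
    and YY_S: "\<And>a b. in_series_S S (\<lambda>n. YY a n b)"
    and YY_T: "\<And>a n b. T3 (YY a n b) - YY a n (T2 b) = YY (T1 a) n b"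
    and YY_D: "\<And>a n b. YY (T1 a) n b = s3 (- n) (YY a (n - 1) b)"
  shows "(\<forall>v a b n m k. jacobi_coeff s3 Y3 YY Y2 Y1 v a b n m k) \<longleftrightarrow>
         ((\<forall>v a b k. normal_order_coeff Y3 YY Y2 Y1 v a b k) \<and>
          (\<forall>v a b m k. commutator_coeff s3 Y3 YY Y2 Y1 v a b m k))"
proof -
  have vs3: "vector_space s3" and lin3: "\<And>v n. Vector_Spaces.linear s3 s3 (Y3 v n)"
    using M3 unfolding va_module_def by auto
  have tr1: "\<And>v a. \<exists>N. \<forall>n\<ge>N. Y1 v n a = 0" using M1 unfolding va_module_def by auto
  have tr2: "\<And>v b. \<exists>N. \<forall>n\<ge>N. Y2 v n b = 0" using M2 unfolding va_module_def by auto
  have trYY: "\<And>a b k. ez (\<lambda>j. YY a (k + of_nat j) b)"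
    using YY_trunc YY_S by blast
  have d1: "\<And>v n x. Y1 (TV v) n x = s1 (- of_int n) (Y1 v (n - 1) x)" by (rule mod_deriv[OF VA M1])
  have d2: "\<And>v n x. Y2 (TV v) n x = s2 (- of_int n) (Y2 v (n - 1) x)" by (rule mod_deriv[OF VA M2])
  have d3: "\<And>v n x. Y3 (TV v) n x = s3 (- of_int n) (Y3 v (n - 1) x)" by (rule mod_deriv[OF VA M3])
  interpret S: setting s1 s2 s3 Y1 Y2 Y3 YY TV
    using vs3 lin3 YY_lin1 YY_lin2 trYY tr1 tr2 d1 d2 d3 by (simp add: setting_def)
  show ?thesis
  proof
    assume J: "\<forall>v a b n m k. jacobi_coeff s3 Y3 YY Y2 Y1 v a b n m k"
    have D: "\<And>v a b n m k. S.DD v a b n m k = 0" using J S.jc_iff by blast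
    show "(\<forall>v a b k. normal_order_coeff Y3 YY Y2 Y1 v a b k) \<and>
          (\<forall>v a b m k. commutator_coeff s3 Y3 YY Y2 Y1 v a b m k)"
    proof (intro conjI allI)
      fix v a b k
      show "normal_order_coeff Y3 YY Y2 Y1 v a b k"
        using D[of v a b "-1" 0 k] unfolding normal_order_coeff_def S.DD_def S.JAm1 S.JBm1 S.JC0
        by (simp add: algebra_simps)
    next
      fix v a b m k
      show "commutator_coeff s3 Y3 YY Y2 Y1 v a b m k"
        using D[of v a b 0 m k] unfolding commutator_coeff_def S.DD_def S.JA0 S.JB0 S.JC_def
        by simp
    qed
  next
    assume H: "(\<forall>v a b k. normal_order_coeff Y3 YY Y2 Y1 v a b k) \<and>
          (\<forall>v a b m k. commutator_coeff s3 Y3 YY Y2 Y1 v a b m k)"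
    show "\<forall>v a b n m k. jacobi_coeff s3 Y3 YY Y2 Y1 v a b n m k"
    proof (intro allI)
      fix v a b n m k
      have "S.DD v a b n m k = 0" by (rule S.main_back) (use H in auto)
      then show "jacobi_coeff s3 Y3 YY Y2 Y1 v a b n m k" using S.jc_iff by blast
    qed
  qed
qed

end
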